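(* Let $1\le p<2$, let $N\in\mathbb N$, $d,n\ge 1$, and let $f_1,\dots,f_d\colon\mathbb R^n\to\mathbb R^n$ be of class $C^2_b$ with $\max_{\mu=1,\dots,d}\|f_\mu\|_{C^2_b}\le L$ for some constant $L>0$. Let $\mathbf w=(\mathbf w_0,\dots,\mathbf w_N)$ and $\tilde{\mathbf w}=(\tilde{\mathbf w}_0,\dots,\tilde{\mathbf w}_N)$ be time series in $\mathbb R^d$, let $\xi,\tilde\xi\in\mathbb R^n$, and let $\mathbf x,\tilde{\mathbf x}$ be the solutions of \[ \mathbf x_{k+1}=\mathbf x_k+\sum_{\mu=1}^d f_\mu(\mathbf x_k)(\mathbf w^\mu_{k+1}-\mathbf w^\mu_k),\quad \mathbf x_0=\xi,\qquad \tilde{\mathbf x}_{k+1}=\tilde{\mathbf x}_k+\sum_{\mu=1}^d f_\mu(\tilde{\mathbf x}_k)(\tilde{\mathbf w}^\mu_{k+1}-\tilde{\mathbf w}^\mu_k),\quad \tilde{\mathbf x}_0=\tilde\xi, \] for $k=0,\dots,N-1$. Then \[ \sup_{k=0,\dots,N}|\mathbf x_k-\tilde{\mathbf x}_k|\le 2c_{p,N}^{1/p}\exp\!\Big(c_{p,N}L^p\big(\|\mathbf w\|_{p;[0,N]}^p+\|\tilde{\mathbf w}\|_{p;[0,N]}^p\big)\Big)\big(|\xi-\tilde\xi|+L\|\mathbf w-\tilde{\mathbf w}\|_{p;[0,N]}\big), \] where $c_{p,N}\coloneqq(4e^2)^p\big(4^{p-1}C_{p,N}^p+1\big)$ and $C_{p,N}\coloneqq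 2^{2/p}\zeta_N(2/p)$, with $\zeta_N(s)\coloneqq\sum_{j=1}^N j^{-s}$.
   Context: $\mathbb R^n$ carries a fixed norm $|\cdot|$ and $\mathbb R^d$ carries the $\ell^1$ norm $|a|=\sum_\mu|a^\mu|$; derivatives are measured in the induced operator norms. For $g\colon\mathbb R^n\to\mathbb R^n$, $\|g\|_{C^2_b}\coloneqq\max_{j=0,1,2}\|D^jg\|_\infty$ (with $D^0g=g$), and $C^2_b$ is the class of $C^2$ maps for which this is finite. A time series is a finite sequence $\mathbf w=(\mathbf w_0,\dots,\mathbf w_N)$; upper indices denote components. For $0\le k<l\le N$, $\mathcal S_{k,l}$ is the set of all increasing sequences $s=(s_0=k<s_1<\dots<s_m<s_{m+1}=l)$ of integers, with $\#s\coloneqq m$, and the $p$-variation is $\|\mathbf w\|_{p;[k,l]}\coloneqq\big(\max_{s\in\mathcal S_{k,l}}\sum_{j=0}^{\#s}|\mathbf w_{s_{j+1}}-\mathbf w_{s_j}|^p\big)^{1/p}$. *)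

theory Defs
  imports "HOL-Analysis.Analysis"
begin

text \<open>Vectors of R^d are represented as functions nat => real, only the components
  0..d-1 being relevant. The norm on R^d is the l1 norm.\<close>
definition l1norm :: "nat \<Rightarrow> (nat \<Rightarrow> real) \<Rightarrow> real" where
  "l1norm d a = (\<Sum>\<mu><d. \<bar>a \<mu>\<bar>)"

definition partitions :: "nat \<Rightarrow> nat \<Rightarrow> nat list set" where
  "partitions k l = {s. s \<noteq> [] \<and> sorted_wrt (<) s \<and> hd s = k \<and> last s = l}"

definition pvar_sum :: "real \<Rightarrow> nat \<Rightarrow> (nat \<Rightarrow> nat \<Rightarrow> real) \<Rightarrow> nat list \<Rightarrow> real" where
  "pvar_sum p d w s =
     (\<Sum>j < length s - 1. l1norm d (\<lambda>\<mu>. w (s ! Suc j) \<mu> - w (s ! j) \<mu>) powr p)"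

definition pvar :: "real \<Rightarrow> nat \<Rightarrow> (nat \<Rightarrow> nat \<Rightarrow> real) \<Rightarrow> nat \<Rightarrow> nat \<Rightarrow> real" where
  "pvar p d w k l = (Max (pvar_sum p d w ` partitions k l)) powr (1 / p)"

definition zetaN :: "nat \<Rightarrow> real \<Rightarrow> real" where
  "zetaN N s = (\<Sum>j=1..N. real j powr (- s))"

definition CpN :: "real \<Rightarrow> nat \<Rightarrow> real" where
  "CpN p N = 2 powr (2 / p) * zetaN N (2 / p)"

definition cpN :: "real \<Rightarrow> nat \<Rightarrow> real" where
  "cpN p N = (4 * exp 2) powr p * (4 powr (p - 1) * CpN p N powr p + 1)"

text \<open>f : V -> V is C^2_b with ||f||_{C^2_b} <= L, where Df, D2f are the first and
  second derivatives (operator norms via the bounded-linear-function type).\<close>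
definition C2b_bounded :: "('a::real_normed_vector \<Rightarrow> 'a) \<Rightarrow> real \<Rightarrow> bool" where
  "C2b_bounded f L \<longleftrightarrow>
     (\<exists>Df D2f. (\<forall>x. (f has_derivative blinfun_apply (Df x)) (at x)) \<and>
               (\<forall>x. (Df has_derivative blinfun_apply (D2f x)) (at x)) \<and>
               continuous_on UNIV D2f \<and>
               (\<forall>x. norm (f x) \<le> L \<and> norm (Df x) \<le> L \<and> norm (D2f x) \<le> L))"

end

theory Submission
  imports Defs
begin

fun Ssum :: "(nat \<Rightarrow> nat \<Rightarrow> 'a::ab_group_add) \<Rightarrow> nat list \<Rightarrow> 'a" where
  "Ssum X (a # b # r) = X a b + Ssum X (b # r)"
| "Ssum X _ = 0"

fun Tsum :: "(nat \<Rightarrow> nat \<Rightarrow> real) \<Rightarrow> nat list \<Rightarrow> real" where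
  "Tsum R (a # u # b # r) = (R a u + R u b) + Tsum R (u # b # r)"
| "Tsum R _ = 0"

definition ctrl_ok :: "(nat \<Rightarrow> nat \<Rightarrow> real) \<Rightarrow> bool" where
  "ctrl_ok R \<longleftrightarrow> (\<forall>a b. 0 \<le> R a b) \<and> (\<forall>a u b. a \<le> u \<longrightarrow> u \<le> b \<longrightarrow> R a u + R u b \<le> R a b)"

lemma ctrl_mono:
  assumes "ctrl_ok R" "a' \<le> a" "a \<le> b" "b \<le> b'"
  shows "R a b \<le> R a' b'"
proof -
  have "R a' a + R a b \<le> R a' b" using assms unfolding ctrl_ok_def by blast
  moreover have "R a' b + R b b' \<le> R a' b'" using assms unfolding ctrl_ok_def by auto
  moreover have "0 \<le> R a' a" "0 \<le> R b b'" using assms unfolding ctrl_ok_def by auto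
  ultimately show ?thesis by linarith
qed

lemma Ssum_remove:
  "Ssum X (ys @ a # u # b # zs) = Ssum X (ys @ a # b # zs) + X a u + X u b - X a b"
  by (induction ys rule: induct_list012) (simp_all add: algebra_simps)

lemma Ssum_snoc: "xs \<noteq> [] \<Longrightarrow> Ssum X (xs @ [y]) = Ssum X xs + X (last xs) y"
  by (induction xs rule: induct_list012) (simp_all add: algebra_simps)

lemma Ssum_upt: "s \<le> t \<Longrightarrow> Ssum X [s..<Suc t] = (\<Sum>k\<in>{s..<t}. X k (Suc k))"
proof (induction t)
  case 0 then show ?case by simp
next
  case (Suc t)
  show ?case
  proof (cases "s = Suc t")
    case True then show ?thesis by simp
  next
    case False
    then have "s \<le> t" using Suc by simp
    have "[s..<Suc (Suc t)] = [s..<Suc t] @ [Suc t]" using \<open>s \<le> t\<close> by simp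
    then have "Ssum X [s..<Suc (Suc t)] = Ssum X [s..<Suc t] + X t (Suc t)"
      using Ssum_snoc[of "[s..<Suc t]" X "Suc t"] \<open>s \<le> t\<close> by simp
    then show ?thesis using Suc.IH[OF \<open>s \<le> t\<close>] \<open>s \<le> t\<close> by simp
  qed
qed

lemma Tsum_le_aux:
  assumes "\<And>a b. 0 \<le> R a b"
  shows "Tsum R (a # u # r) + R a u \<le> 2 * Ssum R (a # u # r)"
  using assms
proof (induction r arbitrary: a u)
  case Nil then show ?case by simp
next
  case (Cons b r)
  have "Tsum R (u # b # r) + R u b \<le> 2 * Ssum R (u # b # r)" using Cons by blast
  then show ?case by simp
qed

lemma Tsum_le: 
  assumes "\<And>a b. 0 \<le> R a b"
  shows "Tsum R xs \<le> 2 * Ssum R xs"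
proof (cases "\<exists>a u r. xs = a # u # r")
  case True
  then obtain a u r where "xs = a # u # r" by blast
  then show ?thesis using Tsum_le_aux[of R a u r, OF assms] assms[of a u] by simp
next
  case False
  then have "xs = [] \<or> (\<exists>a. xs = [a])" by (metis list.exhaust)
  then show ?thesis by auto
qed

lemma sorted_hd_last: "sorted_wrt (<) (b # r) \<Longrightarrow> (b::nat) \<le> last (b # r)"
proof -
  assume a: "sorted_wrt (<) (b # r)"
  have "last (b # r) \<in> set (b # r)" by simp
  then show ?thesis using a by (cases "last (b#r) = b") auto
qed

lemma Ssum_le_ctrl:
  assumes "ctrl_ok R" "sorted_wrt (<) xs" "xs \<noteq> []"
  shows "Ssum R xs \<le> R (hd xs) (last xs)"
  using assms(2,3)
proof (induction xs rule: induct_list012)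
  case (2 x) then show ?case using assms(1) unfolding ctrl_ok_def by simp
next
  case (3 a b r)
  have "Ssum R (b # r) \<le> R b (last (b # r))" using 3 by simp
  moreover have "a \<le> b" "b \<le> last (b # r)" using 3(3) sorted_hd_last[of b r] by auto
  ultimately show ?case using assms(1) unfolding ctrl_ok_def by force
qed simp

lemma pigeon:
  assumes "3 \<le> length xs"
  shows "\<exists>ys a u b zs. xs = ys @ a # u # b # zs \<and> (R a u + R u b) * (real (length xs) - 2) \<le> Tsum R xs"
  using assms
proof (induction R xs rule: Tsum.induct)
  case (1 R a u b r)
  show ?case
  proof (cases r)
    case Nil
    then show ?thesis by (rule_tac x="[]" in exI) auto
  next
    case (Cons c r')
    then have "3 \<le> length (u # b # r)" by simp
    from "1.IH"[OF this] obtain ys a' u' b' zs where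
      h: "u # b # r = ys @ a' # u' # b' # zs"
      "(R a' u' + R u' b') * (real (length (u # b # r)) - 2) \<le> Tsum R (u # b # r)" by blast
    define m where "m = real (length (a # u # b # r)) - 2"
    have m2: "m \<ge> 2" using Cons unfolding m_def by simp
    have hm: "real (length (u # b # r)) - 2 = m - 1" unfolding m_def by simp
    have T: "Tsum R (a # u # b # r) = (R a u + R u b) + Tsum R (u # b # r)" by simp
    show ?thesis
    proof (cases "(R a u + R u b) * m \<le> Tsum R (a # u # b # r)")
      case True
      then show ?thesis unfolding m_def by (rule_tac x="[]" in exI) auto
    next
      case False
      let ?v = "R a u + R u b" and ?v' = "R a' u' + R u' b'"
      have "?v * (m - 1) > Tsum R (u # b # r)" using False T by (simp add: algebra_simps)
      then have "?v' * (m - 1) < ?v * (m - 1)" using h(2) hm by simp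
      then have "?v' < ?v" using m2 by (simp add: mult_less_cancel_right)
      have "?v' * m = ?v' * (m - 1) + ?v'" by (simp add: algebra_simps)
      then have "?v' * m \<le> Tsum R (a # u # b # r)" using h(2) T \<open>?v' < ?v\<close> unfolding hm by linarith
      then show ?thesis using h(1) unfolding m_def
        by (rule_tac x="a # ys" in exI) auto
    qed
  qed
qed auto

lemma zetaN_Suc: "zetaN (Suc m) th = zetaN m th + real (Suc m) powr (- th)"
  unfolding zetaN_def by simp

lemma sewing_list:
  fixes X :: "nat \<Rightarrow> nat \<Rightarrow> 'a::real_normed_vector"
  assumes th: "th > 0" and K: "K \<ge> 0" and R: "ctrl_ok R"
    and hyp: "\<And>a u b. s \<le> a \<Longrightarrow> a < u \<Longrightarrow> u < b \<Longrightarrow> b \<le> t \<Longrightarrow>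
       norm (X a b - X a u - X u b) \<le> K * ((R a u + R u b) / 2) powr th"
  shows "length xs = m + 2 \<Longrightarrow> sorted_wrt (<) xs \<Longrightarrow> hd xs = s \<Longrightarrow> last xs = t \<Longrightarrow>
    set xs \<subseteq> {s..t} \<Longrightarrow> norm (Ssum X xs - X s t) \<le> K * zetaN m th * R s t powr th"
proof (induction m arbitrary: xs)
  case 0
  then obtain a b where "xs = [a, b]" by (auto simp: length_Suc_conv numeral_2_eq_2)
  then show ?case using 0 by (simp add: zetaN_def)
next
  case (Suc m)
  have R0: "\<And>a b. 0 \<le> R a b" using R unfolding ctrl_ok_def by blast
  have "3 \<le> length xs" using Suc by simp
  from pigeon[OF this, of R] obtain ys a u b zs where
    xs: "xs = ys @ a # u # b # zs" and
    pv: "(R a u + R u b) * (real (length xs) - 2) \<le> Tsum R xs" by blast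
  have len: "real (length xs) - 2 = real (Suc m)" using Suc.prems by simp
  have xne: "xs \<noteq> []" using Suc.prems(1) by auto
  have "Tsum R xs \<le> 2 * Ssum R xs" by (rule Tsum_le[OF R0])
  also have "Ssum R xs \<le> R s t" using Ssum_le_ctrl[OF R, of xs] Suc.prems xne by auto
  finally have "(R a u + R u b) * real (Suc m) \<le> 2 * R s t" using pv len by simp
  then have vle: "(R a u + R u b) / 2 \<le> R s t / real (Suc m)"
    by (simp add: field_simps)
  have srt: "sorted_wrt (<) ys" "sorted_wrt (<) (a # u # b # zs)"
     "\<forall>x\<in>set ys. \<forall>y\<in>set (a # u # b # zs). x < y"
    using Suc.prems(2) unfolding xs sorted_wrt_append by auto
  have aub: "a < u" "u < b" using srt(2) by auto
  have sab: "s \<le> a" "b \<le> t" using Suc.prems(5) unfolding xs by auto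
  define xs' where "xs' = ys @ a # b # zs"
  have p1: "length xs' = m + 2" using Suc.prems(1) unfolding xs xs'_def by simp
  have p2: "sorted_wrt (<) xs'" using srt unfolding xs'_def sorted_wrt_append by auto
  have p3: "hd xs' = s" using Suc.prems(3) unfolding xs xs'_def by (cases ys) auto
  have p4: "last xs' = t" using Suc.prems(4) unfolding xs xs'_def by (cases zs) auto
  have p5: "set xs' \<subseteq> {s..t}" using Suc.prems(5) unfolding xs xs'_def by auto
  have IH: "norm (Ssum X xs' - X s t) \<le> K * zetaN m th * R s t powr th"
    using Suc.IH[OF p1 p2 p3 p4 p5] .
  have eq: "Ssum X xs - X s t = (Ssum X xs' - X s t) - (X a b - X a u - X u b)"
    unfolding xs xs'_def Ssum_remove by (simp add: algebra_simps)
  have "norm (X a b - X a u - X u b) \<le> K * ((R a u + R u b) / 2) powr th"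
    using hyp[OF sab(1) aub sab(2)] .
  also have "\<dots> \<le> K * (R s t / real (Suc m)) powr th"
    using vle R0 K th by (intro mult_left_mono powr_mono2) auto
  also have "(R s t / real (Suc m)) powr th = real (Suc m) powr (- th) * R s t powr th"
    using R0 by (simp add: powr_divide powr_minus_divide)
  finally have d: "norm (X a b - X a u - X u b) \<le> K * (real (Suc m) powr (- th) * R s t powr th)" .
  have "norm (Ssum X xs - X s t) \<le> norm (Ssum X xs' - X s t) + norm (X a b - X a u - X u b)"
    unfolding eq by (rule norm_triangle_ineq4)
  also have "\<dots> \<le> K * zetaN m th * R s t powr th + K * (real (Suc m) powr (- th) * R s t powr th)"
    using IH d by linarith
  also have "\<dots> = K * zetaN (Suc m) th * R s t powr th"
    unfolding zetaN_Suc by (simp add: algebra_simps)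
  finally show ?case .
qed

lemma zetaN_mono: "m \<le> n \<Longrightarrow> zetaN m th \<le> zetaN n th"
  unfolding zetaN_def by (rule sum_mono2) auto

lemma zetaN_nonneg: "0 \<le> zetaN m th"
  unfolding zetaN_def by (rule sum_nonneg) auto

lemma sewing:
  fixes X :: "nat \<Rightarrow> nat \<Rightarrow> 'a::real_normed_vector"
  assumes th: "th > 0" and K: "K \<ge> 0" and R: "ctrl_ok R"
    and hyp: "\<And>a u b. s \<le> a \<Longrightarrow> a < u \<Longrightarrow> u < b \<Longrightarrow> b \<le> t \<Longrightarrow>
       norm (X a b - X a u - X u b) \<le> K * ((R a u + R u b) / 2) powr th"
    and st: "s < t" and tN: "t - s \<le> N"
  shows "norm ((\<Sum>k\<in>{s..<t}. X k (Suc k)) - X s t) \<le> K * zetaN N th * R s t powr th"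
proof -
  have "norm (Ssum X [s..<Suc t] - X s t) \<le> K * zetaN (t - s - 1) th * R s t powr th"
    by (rule sewing_list[OF th K R hyp]) (use st sorted_wrt_upt[of s "Suc t"] in auto)
  also have "\<dots> \<le> K * zetaN N th * R s t powr th"
    using K tN by (intro mult_right_mono mult_left_mono zetaN_mono) auto
  finally show ?thesis using Ssum_upt[of s t X] st by simp
qed

definition cvar :: "real \<Rightarrow> nat \<Rightarrow> (nat \<Rightarrow> nat \<Rightarrow> real) \<Rightarrow> nat \<Rightarrow> nat \<Rightarrow> real" where
  "cvar p d y a b = (if a \<le> b then Max (pvar_sum p d y ` partitions a b) else 0)"

lemma pvar_sum_Ssum:
  "pvar_sum p d y xs = Ssum (\<lambda>a b. l1norm d (\<lambda>\<mu>. y b \<mu> - y a \<mu>) powr p) xs"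
proof (induction xs rule: induct_list012)
  case (3 x z zs)
  have "pvar_sum p d y (x # z # zs) =
     (\<Sum>j < Suc (length zs). l1norm d (\<lambda>\<mu>. y ((x # z # zs) ! Suc j) \<mu> - y ((x # z # zs) ! j) \<mu>) powr p)"
    unfolding pvar_sum_def by simp
  also have "\<dots> = l1norm d (\<lambda>\<mu>. y z \<mu> - y x \<mu>) powr p + pvar_sum p d y (z # zs)"
    unfolding pvar_sum_def sum.lessThan_Suc_shift by simp
  finally show ?case using 3 by simp
qed (simp_all add: pvar_sum_def)

lemma sorted_bounds:
  assumes "sorted_wrt (<) xs" "xs \<noteq> []" "v \<in> set xs"
  shows "hd xs \<le> (v::nat) \<and> v \<le> last xs"
  using assms
proof (induction xs)
  case (Cons a r)
  show ?case
  proof (cases "r = []")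
    case True then show ?thesis using Cons by simp
  next
    case False
    have "last r \<in> set r" using False by simp
    then have "a < last r" using Cons.prems(1) by simp
    then show ?thesis using Cons False by (auto simp: less_imp_le)
  qed
qed simp

lemma partitions_finite: "finite (partitions a b)"
proof (rule finite_subset)
  show "partitions a b \<subseteq> {xs. set xs \<subseteq> {a..b} \<and> distinct xs}"
  proof
    fix xs assume "xs \<in> partitions a b"
    then have h: "xs \<noteq> []" "sorted_wrt (<) xs" "hd xs = a" "last xs = b"
      unfolding partitions_def by auto
    have "set xs \<subseteq> {a..b}" using sorted_bounds[OF h(2) h(1)] h(3,4) by auto
    moreover have "distinct xs" using h(2) strict_sorted_iff by blast
    ultimately show "xs \<in> {xs. set xs \<subseteq> {a..b} \<and> distinct xs}" by simp
  qed
  show "finite {xs. set xs \<subseteq> {a..b} \<and> distinct xs}" by (rule finite_subset_distinct) simp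
qed

lemma partitions_mem: "a \<le> b \<Longrightarrow> (if a = b then [a] else [a, b]) \<in> partitions a b"
  unfolding partitions_def by auto

lemma partitions_ne: "a \<le> b \<Longrightarrow> partitions a b \<noteq> {}"
  using partitions_mem by blast

lemma pvar_sum_nonneg: "0 \<le> pvar_sum p d y xs"
  unfolding pvar_sum_def by (rule sum_nonneg) simp

lemma cvar_nonneg: "0 \<le> cvar p d y a b"
proof (cases "a \<le> b")
  case True
  have "pvar_sum p d y (if a = b then [a] else [a, b]) \<le> Max (pvar_sum p d y ` partitions a b)"
    using partitions_mem[OF True] partitions_finite by (intro Max_ge) auto
  from order_trans[OF pvar_sum_nonneg this] show ?thesis using True unfolding cvar_def by simp
qed (simp add: cvar_def)

lemma cvar_ge:
  assumes "a \<le> b"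
  shows "l1norm d (\<lambda>\<mu>. y b \<mu> - y a \<mu>) powr p \<le> cvar p d y a b"
proof (cases "a = b")
  case True
  then show ?thesis using cvar_nonneg[of p d y a b] by (simp add: l1norm_def)
next
  case False
  have "pvar_sum p d y [a, b] \<le> Max (pvar_sum p d y ` partitions a b)"
    using partitions_mem[OF assms] partitions_finite False by (intro Max_ge) auto
  then show ?thesis using assms unfolding cvar_def by (simp add: pvar_sum_def)
qed

lemma sorted_single: "sorted_wrt (<) (xs::nat list) \<Longrightarrow> xs \<noteq> [] \<Longrightarrow> hd xs = last xs \<Longrightarrow> xs = [hd xs]"
proof (cases xs)
  case (Cons x r)
  assume a: "sorted_wrt (<) xs" "hd xs = last xs"
  show ?thesis
  proof (cases "r = []")
    case False
    then have "last r \<in> set r" by simp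
    then have "x < last r" using a Cons by simp
    moreover have "x = last r" using a Cons False by simp
    ultimately show ?thesis by auto
  qed (use Cons in simp)
qed simp

lemma cvar_refl: "cvar p d y a a = 0"
proof -
  have "partitions a a = {[a]}"
  proof
    show "partitions a a \<subseteq> {[a]}"
    proof
      fix xs assume "xs \<in> partitions a a"
      then have h: "xs \<noteq> []" "sorted_wrt (<) xs" "hd xs = a" "last xs = a"
        unfolding partitions_def by auto
      then show "xs \<in> {[a]}" using sorted_single[OF h(2) h(1)] by simp
    qed
  qed (simp add: partitions_def)
  then show ?thesis unfolding cvar_def by (simp add: pvar_sum_def)
qed

lemma Ssum_append: "xs \<noteq> [] \<Longrightarrow> ys \<noteq> [] \<Longrightarrow> last xs = hd ys \<Longrightarrow>
  Ssum g (xs @ tl ys) = Ssum g xs + Ssum g ys"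
proof (induction xs rule: induct_list012)
  case (2 x)
  then show ?case by (cases ys) auto
next
  case (3 x z zs)
  then show ?case by simp
qed simp

lemma cvar_super:
  assumes "a \<le> u" "u \<le> b"
  shows "cvar p d y a u + cvar p d y u b \<le> cvar p d y a b"
proof -
  let ?S = "pvar_sum p d y"
  have "Max (?S ` partitions a u) \<in> ?S ` partitions a u"
    by (rule Max_in) (simp_all add: partitions_finite partitions_ne[OF assms(1)])
  then obtain xs1 where x1: "xs1 \<in> partitions a u" "?S xs1 = cvar p d y a u"
    using assms(1) unfolding cvar_def by auto
  have "Max (?S ` partitions u b) \<in> ?S ` partitions u b"
    by (rule Max_in) (simp_all add: partitions_finite partitions_ne[OF assms(2)])
  then obtain xs2 where x2: "xs2 \<in> partitions u b" "?S xs2 = cvar p d y u b"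
    using assms(2) unfolding cvar_def by auto
  have h1: "xs1 \<noteq> []" "sorted_wrt (<) xs1" "hd xs1 = a" "last xs1 = u"
    using x1 unfolding partitions_def by auto
  have h2: "xs2 \<noteq> []" "sorted_wrt (<) xs2" "hd xs2 = u" "last xs2 = b"
    using x2 unfolding partitions_def by auto
  obtain r2 where r2: "xs2 = u # r2" using h2 by (cases xs2) auto
  have srt: "sorted_wrt (<) (xs1 @ tl xs2)"
    unfolding sorted_wrt_append
  proof (intro conjI ballI)
    show "sorted_wrt (<) xs1" by (rule h1(2))
    show "sorted_wrt (<) (tl xs2)" using h2(2) r2 by simp
    fix v z assume vz: "v \<in> set xs1" "z \<in> set (tl xs2)"
    have "v \<le> u" using sorted_bounds[OF h1(2) h1(1) vz(1)] h1(4) by simp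
    moreover have "u < z" using h2(2) vz(2) r2 by simp
    ultimately show "v < z" by simp
  qed
  have lst: "last (xs1 @ tl xs2) = b"
  proof (cases "r2 = []")
    case True then show ?thesis using h1 h2 r2 by simp
  next
    case False then show ?thesis using h2 r2 by simp
  qed
  have mem: "xs1 @ tl xs2 \<in> partitions a b"
    unfolding partitions_def using srt lst h1 by simp
  have "?S (xs1 @ tl xs2) = ?S xs1 + ?S xs2"
    unfolding pvar_sum_Ssum using Ssum_append[OF h1(1) h2(1)] h1(4) h2(3) by simp
  moreover have "?S (xs1 @ tl xs2) \<le> cvar p d y a b"
    using mem partitions_finite assms unfolding cvar_def by (auto intro!: Max_ge)
  ultimately show ?thesis using x1 x2 by simp
qed

lemma cvar_ctrl: "ctrl_ok (cvar p d y)"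
  unfolding ctrl_ok_def using cvar_nonneg cvar_super by blast

lemma pvar_cvar: "a \<le> b \<Longrightarrow> pvar p d y a b = cvar p d y a b powr (1 / p)"
  unfolding pvar_def cvar_def by simp

lemma C2b_facts:
  fixes g :: "'a::real_normed_vector \<Rightarrow> 'a"
  assumes "C2b_bounded g L"
  shows C2b_bound: "norm (g y) \<le> L"
    and C2b_lip: "norm (g y - g z) \<le> L * norm (y - z)"
    and C2b_second: "norm (g (A + al) - g A - g (B + be) + g B) \<le> L * norm (al - be) + L * norm be * norm (A - B)"
proof -
  obtain Df D2f where
    dg: "\<And>x. (g has_derivative blinfun_apply (Df x)) (at x)" and
    dDf: "\<And>x. (Df has_derivative blinfun_apply (D2f x)) (at x)" and
    bd: "\<And>x. norm (g x) \<le> L \<and> norm (Df x) \<le> L \<and> norm (D2f x) \<le> L"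
    using assms unfolding C2b_bounded_def by blast
  show "norm (g y) \<le> L" using bd by blast
  have lipg: "norm (g y - g z) \<le> L * norm (y - z)" for y z
    by (rule differentiable_bound[where S=UNIV and f'="\<lambda>x. blinfun_apply (Df x)"])
       (use dg bd in \<open>auto simp: norm_blinfun.rep_eq[symmetric]\<close>)
  then show "norm (g y - g z) \<le> L * norm (y - z)" .
  have lipD: "norm (Df y - Df z) \<le> L * norm (y - z)" for y z
    by (rule differentiable_bound[where S=UNIV and f'="\<lambda>x. blinfun_apply (D2f x)"])
       (use dDf bd in \<open>auto simp: norm_blinfun.rep_eq[symmetric]\<close>)
  have lipD': "norm (Df (x + be) - Df x) \<le> L * norm be" for x
    using lipD[of "x + be" x] by simp
  define G where "G y = g (y + be) - g y" for y
  have dG: "(G has_derivative blinfun_apply (Df (y + be) - Df y)) (at y)" for y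
  proof -
    have s: "((\<lambda>y. y + be) has_derivative (\<lambda>h. h)) (at y)"
      by (auto intro!: derivative_eq_intros)
    have "((\<lambda>y. g (y + be)) has_derivative (\<lambda>h. blinfun_apply (Df (y + be)) h)) (at y)"
      using has_derivative_compose[OF s dg] by simp
    then have "(G has_derivative (\<lambda>h. blinfun_apply (Df (y + be)) h - blinfun_apply (Df y) h)) (at y)"
      unfolding G_def by (intro has_derivative_diff dg)
    moreover have "blinfun_apply (Df (y + be) - Df y) = (\<lambda>h. blinfun_apply (Df (y + be)) h - blinfun_apply (Df y) h)"
      by (rule ext) (simp add: blinfun.diff_left)
    ultimately show ?thesis by simp
  qed
  have "norm (G A - G B) \<le> (L * norm be) * norm (A - B)"
    by (rule differentiable_bound[where S=UNIV and f'="\<lambda>x. blinfun_apply (Df (x + be) - Df x)"])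
       (use dG lipD' in \<open>auto simp: norm_blinfun.rep_eq[symmetric]\<close>)
  moreover have "norm (g (A + al) - g (A + be)) \<le> L * norm (al - be)"
    using lipg[of "A + al" "A + be"] by simp
  moreover have "g (A + al) - g A - g (B + be) + g B = (g (A + al) - g (A + be)) + (G A - G B)"
    unfolding G_def by (simp add: algebra_simps)
  ultimately show "norm (g (A + al) - g A - g (B + be) + g B) \<le> L * norm (al - be) + L * norm be * norm (A - B)"
    by (metis (no_types, lifting) add_mono norm_triangle_ineq order_trans)
qed

lemma norm_sum_scaleR_le:
  fixes g :: "nat \<Rightarrow> 'a::real_normed_vector"
  assumes "\<And>\<mu>. \<mu> < d \<Longrightarrow> norm (g \<mu>) \<le> G"
  shows "norm (\<Sum>\<mu><d. c \<mu> *\<^sub>R g \<mu>) \<le> G * l1norm d c"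
proof -
  have "norm (\<Sum>\<mu><d. c \<mu> *\<^sub>R g \<mu>) \<le> (\<Sum>\<mu><d. norm (c \<mu> *\<^sub>R g \<mu>))" by (rule norm_sum)
  also have "\<dots> \<le> (\<Sum>\<mu><d. \<bar>c \<mu>\<bar> * G)"
    by (rule sum_mono) (use assms in \<open>auto intro: mult_left_mono\<close>)
  also have "\<dots> = G * l1norm d c" unfolding l1norm_def by (simp add: sum_distrib_left mult.commute)
  finally show ?thesis .
qed

lemma powr_le_root:
  fixes y z p :: real
  assumes "p > 0" "0 \<le> y" "0 \<le> z" "y powr p \<le> z"
  shows "y \<le> z powr (1 / p)"
proof -
  have "y = (y powr p) powr (1 / p)" using assms by (simp add: powr_powr powr_one)
  also have "\<dots> \<le> z powr (1 / p)" using assms by (intro powr_mono2) auto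
  finally show ?thesis .
qed

lemma amgm_powr:
  fixes y z p :: real
  assumes "p > 0" "0 \<le> y" "0 \<le> z"
  shows "y powr (1 / p) * z powr (1 / p) \<le> ((y + z) / 2) powr (2 / p)"
proof -
  have "y powr (1 / p) * z powr (1 / p) = (y * z) powr (1 / p)" by (simp add: powr_mult)
  also have "\<dots> \<le> (((y + z) / 2) ^ 2) powr (1 / p)"
  proof (rule powr_mono2)
    have "((y + z) / 2) ^ 2 - y * z = ((y - z) / 2) ^ 2" by (simp add: power2_eq_square field_simps)
    then show "y * z \<le> ((y + z) / 2) ^ 2" by (metis diff_ge_0_iff_ge zero_le_power2)
  qed (use assms in auto)
  also have "(((y + z) / 2) ^ 2) powr (1 / p) = ((y + z) / 2) powr (2 / p)"
    using assms by (simp add: powr_powr flip: powr_numeral)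
  finally show ?thesis .
qed

lemma powr_two_sq:
  fixes y p :: real
  shows "y powr (2 / p) = (y powr (1 / p)) ^ 2"
proof -
  have "y powr (2 / p) = y powr (1 / p + 1 / p)" by (simp add: add_divide_distrib[symmetric])
  also have "\<dots> = y powr (1 / p) * y powr (1 / p)" by (rule powr_add)
  finally show ?thesis by (simp add: power2_eq_square)
qed

lemma ctrl_ok_lin:
  assumes "ctrl_ok R1" "ctrl_ok R2" "c1 \<ge> 0" "c2 \<ge> 0"
  shows "ctrl_ok (\<lambda>a b. c1 * R1 a b + c2 * R2 a b)"
proof -
  have "c1 * R1 a u + c2 * R2 a u + (c1 * R1 u b + c2 * R2 u b) \<le> c1 * R1 a b + c2 * R2 a b"
    if "a \<le> u" "u \<le> b" for a u b
  proof -
    have "R1 a u + R1 u b \<le> R1 a b" "R2 a u + R2 u b \<le> R2 a b"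
      using assms that unfolding ctrl_ok_def by auto
    then have "c1 * (R1 a u + R1 u b) \<le> c1 * R1 a b" "c2 * (R2 a u + R2 u b) \<le> c2 * R2 a b"
      using assms by (auto intro: mult_left_mono)
    then show ?thesis by (simp add: algebra_simps)
  qed
  moreover have "0 \<le> c1 * R1 a b + c2 * R2 a b" for a b
    using assms unfolding ctrl_ok_def by simp
  ultimately show ?thesis unfolding ctrl_ok_def by blast
qed

lemma exp2_ge5: "5 \<le> exp (2::real)"
proof -
  have h: "3 / 2 \<le> exp (1 / 2 :: real)" using exp_ge_add_one_self[of "1/2"] by simp
  have "exp (2::real) = exp (1/2) ^ 4" by (simp flip: exp_of_nat_mult)
  moreover have "(3/2::real) ^ 4 \<le> exp (1/2) ^ 4" using h by (intro power_mono) auto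
  moreover have "(5::real) \<le> (3/2) ^ 4" by (simp add: power_divide)
  ultimately show ?thesis by linarith
qed

lemma step1:
  fixes f :: "nat \<Rightarrow> 'a::real_normed_vector \<Rightarrow> 'a" and y :: "nat \<Rightarrow> 'a" and z :: "nat \<Rightarrow> nat \<Rightarrow> real"
  assumes p: "1 \<le> p" and L: "L > 0"
    and f: "\<And>\<mu>. \<mu> < d \<Longrightarrow> C2b_bounded (f \<mu>) L"
    and ystep: "\<And>k. k < N \<Longrightarrow> y (Suc k) = y k + (\<Sum>\<mu><d. (z (Suc k) \<mu> - z k \<mu>) *\<^sub>R f \<mu> (y k))"
    and R: "ctrl_ok R"
    and zR: "\<And>a b. a \<le> b \<Longrightarrow> L * l1norm d (\<lambda>\<mu>. z b \<mu> - z a \<mu>) \<le> R a b powr (1/p)"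
    and tN: "t \<le> N" and small: "R s t powr (1/p) \<le> \<delta>" and Zd: "2 * zetaN N (2/p) * \<delta> \<le> 1"
  shows "s \<le> a \<Longrightarrow> a \<le> b \<Longrightarrow> b \<le> t \<Longrightarrow> norm (y b - y a) \<le> 2 * R a b powr (1/p)"
proof (induction "b - a" arbitrary: a b rule: less_induct)
  case less
  show ?case
  proof (cases "a = b")
    case True then show ?thesis by simp
  next
    case False
    then have ab: "a < b" using less.prems by simp
    define Xi where "Xi a' b' = (\<Sum>\<mu><d. (z b' \<mu> - z a' \<mu>) *\<^sub>R f \<mu> (y a'))" for a' b'
    define Wr where "Wr a' b' = R a' b' powr (1/p)" for a' b'
    have R0: "0 \<le> R a' b'" for a' b' using R unfolding ctrl_ok_def by blast
    have Wr0: "0 \<le> Wr a' b'" for a' b' unfolding Wr_def by simp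
    have tel: "(\<Sum>k\<in>{a..<b}. Xi k (Suc k)) = y b - y a"
    proof -
      have "(\<Sum>k\<in>{a..<b}. Xi k (Suc k)) = (\<Sum>k\<in>{a..<b}. y (Suc k) - y k)"
        using less.prems tN by (intro sum.cong) (auto simp: Xi_def ystep)
      also have "\<dots> = y b - y a" using ab by (simp add: sum_Suc_diff')
      finally show ?thesis .
    qed
    have hyp: "norm (Xi a' b' - Xi a' u - Xi u b') \<le> 2 * ((R a' u + R u b') / 2) powr (2/p)"
      if "a \<le> a'" "a' < u" "u < b'" "b' \<le> b" for a' u b'
    proof -
      have eq: "Xi a' b' - Xi a' u - Xi u b' = (\<Sum>\<mu><d. (z b' \<mu> - z u \<mu>) *\<^sub>R (f \<mu> (y a') - f \<mu> (y u)))"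
        unfolding Xi_def by (simp add: sum_subtractf[symmetric] algebra_simps)
      have IH: "norm (y u - y a') \<le> 2 * Wr a' u"
        unfolding Wr_def using less.hyps[of u a'] that less.prems by auto
      have "norm (Xi a' b' - Xi a' u - Xi u b') \<le> (L * norm (y u - y a')) * l1norm d (\<lambda>\<mu>. z b' \<mu> - z u \<mu>)"
        unfolding eq
        by (rule norm_sum_scaleR_le) (use C2b_lip[OF f] in \<open>simp add: norm_minus_commute\<close>)
      also have "\<dots> = norm (y u - y a') * (L * l1norm d (\<lambda>\<mu>. z b' \<mu> - z u \<mu>))" by simp
      also have "\<dots> \<le> (2 * Wr a' u) * Wr u b'"
        using IH zR[of u b'] that L unfolding Wr_def by (intro mult_mono) (auto simp: l1norm_def)
      also have "\<dots> \<le> 2 * ((R a' u + R u b') / 2) powr (2/p)"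
        using amgm_powr[of p "R a' u" "R u b'"] R0 p unfolding Wr_def by auto
      finally show ?thesis .
    qed
    have sew: "norm ((\<Sum>k\<in>{a..<b}. Xi k (Suc k)) - Xi a b) \<le> 2 * zetaN N (2/p) * R a b powr (2/p)"
      by (rule sewing[OF _ _ R hyp]) (use p ab less.prems tN in auto)
    have Z0: "0 \<le> zetaN N (2/p)" by (rule zetaN_nonneg)
    have Wab: "Wr a b \<le> \<delta>"
    proof -
      have "R a b \<le> R s t" using ctrl_mono[OF R, of s a b t] less.prems by simp
      then have "Wr a b \<le> R s t powr (1/p)" unfolding Wr_def using R0 p by (intro powr_mono2) auto
      then show ?thesis using small by simp
    qed
    have nXi: "norm (Xi a b) \<le> Wr a b"
    proof -
      have "norm (Xi a b) \<le> L * l1norm d (\<lambda>\<mu>. z b \<mu> - z a \<mu>)"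
        unfolding Xi_def by (rule norm_sum_scaleR_le) (use C2b_bound[OF f] in auto)
      then show ?thesis using zR[of a b] ab unfolding Wr_def by simp
    qed
    have "norm (y b - y a) \<le> norm (Xi a b) + norm ((\<Sum>k\<in>{a..<b}. Xi k (Suc k)) - Xi a b)"
      unfolding tel by (metis add.commute diff_add_cancel norm_triangle_ineq)
    also have "\<dots> \<le> Wr a b + 2 * zetaN N (2/p) * (Wr a b)^2"
      using nXi sew unfolding Wr_def powr_two_sq by simp
    also have "2 * zetaN N (2/p) * (Wr a b)^2 \<le> (2 * zetaN N (2/p) * \<delta>) * Wr a b"
      using Wab Wr0[of a b] Z0 by (simp add: power2_eq_square mult_left_mono mult_right_mono)
    also have "\<dots> \<le> 1 * Wr a b" using Zd Wr0[of a b] by (intro mult_right_mono) auto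
    finally show ?thesis unfolding Wr_def by simp
  qed
qed

locale setting =
  fixes p L :: real and N d :: nat
    and f :: "nat \<Rightarrow> 'a::real_normed_vector \<Rightarrow> 'a"
    and w wt :: "nat \<Rightarrow> nat \<Rightarrow> real" and x xt :: "nat \<Rightarrow> 'a"
  assumes p: "1 \<le> p" "p < 2"
    and L: "L > 0"
    and f: "\<And>\<mu>. \<mu> < d \<Longrightarrow> C2b_bounded (f \<mu>) L"
    and xstep: "\<And>k. k < N \<Longrightarrow>
        x (Suc k) = x k + (\<Sum>\<mu><d. (w (Suc k) \<mu> - w k \<mu>) *\<^sub>R f \<mu> (x k))"
    and xtstep: "\<And>k. k < N \<Longrightarrow>
        xt (Suc k) = xt k + (\<Sum>\<mu><d. (wt (Suc k) \<mu> - wt k \<mu>) *\<^sub>R f \<mu> (xt k))"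
begin

definition "v = (\<lambda>k \<mu>. w k \<mu> - wt k \<mu>)"
definition "om a b = L powr p * (cvar p d w a b + cvar p d wt a b)"
definition "la a b = L powr p * cvar p d v a b"
definition "W a b = om a b powr (1/p)"
definition "V a b = la a b powr (1/p)"
definition "e k = x k - xt k"
definition "Z = zetaN N (2/p)"
definition "C = 2 powr (2/p) * Z"

lemma om_ctrl: "ctrl_ok om"
  unfolding om_def using ctrl_ok_lin[OF cvar_ctrl cvar_ctrl, of "L powr p" "L powr p"]
  by (simp add: algebra_simps)

lemma la_ctrl: "ctrl_ok la"
  unfolding la_def using ctrl_ok_lin[OF cvar_ctrl cvar_ctrl, of "L powr p" 0]
  by (simp add: algebra_simps)

lemma om0: "0 \<le> om a b" using om_ctrl unfolding ctrl_ok_def by blast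
lemma la0: "0 \<le> la a b" using la_ctrl unfolding ctrl_ok_def by blast
lemma W0: "0 \<le> W a b" unfolding W_def by simp
lemma V0: "0 \<le> V a b" unfolding V_def by simp
lemma Z0: "0 \<le> Z" unfolding Z_def by (rule zetaN_nonneg)
lemma C0: "0 \<le> C" unfolding C_def using Z0 by simp

lemma p0: "p > 0" using p by simp

lemma incr_bound:
  assumes "a \<le> b" "L powr p * l1norm d (\<lambda>\<mu>. y b \<mu> - y a \<mu>) powr p \<le> R"
  shows "L * l1norm d (\<lambda>\<mu>. y b \<mu> - y a \<mu>) \<le> R powr (1/p)"
proof (rule powr_le_root[OF p0])
  show "0 \<le> L * l1norm d (\<lambda>\<mu>. y b \<mu> - y a \<mu>)" using L by (simp add: l1norm_def)
  show "0 \<le> R" using assms(2) by (meson order_trans mult_nonneg_nonneg powr_ge_zero)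
  show "(L * l1norm d (\<lambda>\<mu>. y b \<mu> - y a \<mu>)) powr p \<le> R" using assms(2) by (simp add: powr_mult)
qed

lemma w_W: "a \<le> b \<Longrightarrow> L * l1norm d (\<lambda>\<mu>. w b \<mu> - w a \<mu>) \<le> W a b"
  unfolding W_def om_def
  by (rule incr_bound) (use cvar_ge[of a b d w p] cvar_nonneg[of p d wt a b] L in \<open>auto intro!: mult_left_mono\<close>)

lemma wt_W: "a \<le> b \<Longrightarrow> L * l1norm d (\<lambda>\<mu>. wt b \<mu> - wt a \<mu>) \<le> W a b"
  unfolding W_def om_def
  by (rule incr_bound) (use cvar_ge[of a b d wt p] cvar_nonneg[of p d w a b] L in \<open>auto intro!: mult_left_mono\<close>)

lemma v_V: "a \<le> b \<Longrightarrow> L * l1norm d (\<lambda>\<mu>. v b \<mu> - v a \<mu>) \<le> V a b"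
  unfolding V_def la_def
  by (rule incr_bound) (use cvar_ge[of a b d v p] L in \<open>auto intro!: mult_left_mono\<close>)

lemma W_mono: "a' \<le> a \<Longrightarrow> a \<le> b \<Longrightarrow> b \<le> b' \<Longrightarrow> W a b \<le> W a' b'"
  unfolding W_def using ctrl_mono[OF om_ctrl] om0 p by (intro powr_mono2) auto

lemma V_mono: "a' \<le> a \<Longrightarrow> a \<le> b \<Longrightarrow> b \<le> b' \<Longrightarrow> V a b \<le> V a' b'"
  unfolding V_def using ctrl_mono[OF la_ctrl] la0 p by (intro powr_mono2) auto

lemma xt_incr:
  assumes "t \<le> N" "W s t \<le> \<delta>" "2 * Z * \<delta> \<le> 1" "s \<le> a" "a \<le> b" "b \<le> t"
  shows "norm (xt b - xt a) \<le> 2 * W a b"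
proof -
  have "norm (xt b - xt a) \<le> 2 * om a b powr (1/p)"
    by (rule step1[where y=xt and z=wt and f=f and R=om and N=N and d=d and p=p and L=L and \<delta>=\<delta> and t=t and s=s,
        OF p(1) L f xtstep om_ctrl])
       (use wt_W assms in \<open>auto simp: W_def Z_def\<close>)
  then show ?thesis unfolding W_def .
qed


lemma e_step: "k < N \<Longrightarrow> e (Suc k) - e k =
   (\<Sum>\<mu><d. (w (Suc k) \<mu> - w k \<mu>) *\<^sub>R f \<mu> (x k) - (wt (Suc k) \<mu> - wt k \<mu>) *\<^sub>R f \<mu> (xt k))"
proof -
  assume k: "k < N"
  have 1: "x (Suc k) - x k = (\<Sum>\<mu><d. (w (Suc k) \<mu> - w k \<mu>) *\<^sub>R f \<mu> (x k))" using xstep[OF k] by simp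
  have 2: "xt (Suc k) - xt k = (\<Sum>\<mu><d. (wt (Suc k) \<mu> - wt k \<mu>) *\<^sub>R f \<mu> (xt k))" using xtstep[OF k] by simp
  have "e (Suc k) - e k = (x (Suc k) - x k) - (xt (Suc k) - xt k)" unfolding e_def by simp
  then show ?thesis unfolding 1 2 sum_subtractf .
qed

lemma Xi_split:
  "(\<Sum>\<mu><d. (w b \<mu> - w a \<mu>) *\<^sub>R f \<mu> (x a) - (wt b \<mu> - wt a \<mu>) *\<^sub>R f \<mu> (xt a)) =
   (\<Sum>\<mu><d. (w b \<mu> - w a \<mu>) *\<^sub>R (f \<mu> (x a) - f \<mu> (xt a))) + (\<Sum>\<mu><d. (v b \<mu> - v a \<mu>) *\<^sub>R f \<mu> (xt a))"
  unfolding sum.distrib[symmetric] v_def by (intro sum.cong refl) (simp add: algebra_simps)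

lemma Xi_bound:
  assumes "a \<le> b"
  shows "norm (\<Sum>\<mu><d. (w b \<mu> - w a \<mu>) *\<^sub>R f \<mu> (x a) - (wt b \<mu> - wt a \<mu>) *\<^sub>R f \<mu> (xt a))
    \<le> norm (e a) * W a b + V a b"
proof -
  have "norm (\<Sum>\<mu><d. (w b \<mu> - w a \<mu>) *\<^sub>R (f \<mu> (x a) - f \<mu> (xt a))) \<le> (L * norm (e a)) * l1norm d (\<lambda>\<mu>. w b \<mu> - w a \<mu>)"
    by (rule norm_sum_scaleR_le) (use C2b_lip[OF f] in \<open>auto simp: e_def\<close>)
  also have "\<dots> = norm (e a) * (L * l1norm d (\<lambda>\<mu>. w b \<mu> - w a \<mu>))" by simp
  also have "\<dots> \<le> norm (e a) * W a b" using w_W[OF assms] by (intro mult_left_mono) auto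
  finally have 1: "norm (\<Sum>\<mu><d. (w b \<mu> - w a \<mu>) *\<^sub>R (f \<mu> (x a) - f \<mu> (xt a))) \<le> norm (e a) * W a b" .
  have "norm (\<Sum>\<mu><d. (v b \<mu> - v a \<mu>) *\<^sub>R f \<mu> (xt a)) \<le> L * l1norm d (\<lambda>\<mu>. v b \<mu> - v a \<mu>)"
    by (rule norm_sum_scaleR_le) (use C2b_bound[OF f] in auto)
  also have "\<dots> \<le> V a b" using v_V[OF assms] .
  finally have 2: "norm (\<Sum>\<mu><d. (v b \<mu> - v a \<mu>) *\<^sub>R f \<mu> (xt a)) \<le> V a b" .
  show ?thesis unfolding Xi_split using 1 2 norm_triangle_ineq[of "\<Sum>\<mu><d. (w b \<mu> - w a \<mu>) *\<^sub>R (f \<mu> (x a) - f \<mu> (xt a))" "\<Sum>\<mu><d. (v b \<mu> - v a \<mu>) *\<^sub>R f \<mu> (xt a)"] by linarith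
qed

lemma step2:
  assumes tN: "t \<le> N" and small: "W s t \<le> \<delta>" and Zd: "2 * Z * \<delta> \<le> 1" and Cd: "4 * C * \<delta> \<le> 1"
    and M: "\<And>k. s \<le> k \<Longrightarrow> k \<le> t \<Longrightarrow> norm (e k) \<le> M"
  shows "s \<le> a \<Longrightarrow> a \<le> b \<Longrightarrow> b \<le> t \<Longrightarrow> norm (e b - e a) \<le> 2 * M * W a b + 2 * V a b"
proof (induction "b - a" arbitrary: a b rule: less_induct)
  case less
  have M0: "0 \<le> M" using M[of s] less.prems norm_ge_zero[of "e s"] by linarith
  show ?case
  proof (cases "a = b")
    case True then show ?thesis using M0 W0[of a b] V0[of a b] by simp
  next
    case False
    then have ab: "a < b" using less.prems by simp
    define Xi where "Xi a' b' = (\<Sum>\<mu><d. (w b' \<mu> - w a' \<mu>) *\<^sub>R f \<mu> (x a') - (wt b' \<mu> - wt a' \<mu>) *\<^sub>R f \<mu> (xt a'))" for a' b'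
    define om' where "om' = (if om a b = 0 then 1 else om a b)"
    define la' where "la' = (if la a b = 0 then 1 else la a b)"
    define rho where "rho = (\<lambda>a' b'. (1/om') * om a' b' + (1/la') * la a' b')"
    have om'0: "om' > 0" using om0[of a b] unfolding om'_def by auto
    have la'0: "la' > 0" using la0[of a b] unfolding la'_def by auto
    have rho_ctrl: "ctrl_ok rho" unfolding rho_def using ctrl_ok_lin[OF om_ctrl la_ctrl, of "1/om'" "1/la'"] om'0 la'0 by simp
    have rho0: "0 \<le> rho a' b'" for a' b' using rho_ctrl unfolding ctrl_ok_def by blast
    have Wrho: "W a' b' \<le> W a b * rho a' b' powr (1/p)" if "a \<le> a'" "a' \<le> b'" "b' \<le> b" for a' b'
    proof (cases "om a b = 0")
      case True
      then have "om a' b' = 0" using ctrl_mono[OF om_ctrl that(1-3)] om0[of a' b'] by simp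
      then show ?thesis using W0 by (simp add: W_def)
    next
      case False
      then have "om a' b' = om a b * (om a' b' / om')" unfolding om'_def by simp
      also have "\<dots> \<le> om a b * rho a' b'"
        using om0[of a b] la0[of a' b'] la'0 unfolding rho_def by (intro mult_left_mono) auto
      finally have "W a' b' \<le> (om a b * rho a' b') powr (1/p)"
        unfolding W_def using om0 p by (intro powr_mono2) auto
      then show ?thesis unfolding W_def by (simp add: powr_mult)
    qed
    have Vrho: "V a' b' \<le> V a b * rho a' b' powr (1/p)" if "a \<le> a'" "a' \<le> b'" "b' \<le> b" for a' b'
    proof (cases "la a b = 0")
      case True
      then have "la a' b' = 0" using ctrl_mono[OF la_ctrl that(1-3)] la0[of a' b'] by simp
      then show ?thesis using V0 by (simp add: V_def)
    next
      case False
      then have "la a' b' = la a b * (la a' b' / la')" unfolding la'_def by simp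
      also have "\<dots> \<le> la a b * rho a' b'"
        using la0[of a b] om0[of a' b'] om'0 unfolding rho_def by (intro mult_left_mono) auto
      finally have "V a' b' \<le> (la a b * rho a' b') powr (1/p)"
        unfolding V_def using la0 p by (intro powr_mono2) auto
      then show ?thesis unfolding V_def by (simp add: powr_mult)
    qed
    have rho_ab: "rho a b \<le> 2"
    proof -
      have "om a b / om' \<le> 1" "la a b / la' \<le> 1"
        unfolding om'_def la'_def using om0[of a b] la0[of a b] by auto
      then show ?thesis unfolding rho_def by simp
    qed
    have tel: "(\<Sum>k\<in>{a..<b}. Xi k (Suc k)) = e b - e a"
    proof -
      have "(\<Sum>k\<in>{a..<b}. Xi k (Suc k)) = (\<Sum>k\<in>{a..<b}. e (Suc k) - e k)"
        using less.prems tN by (intro sum.cong) (auto simp: Xi_def e_step)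
      also have "\<dots> = e b - e a" using ab by (simp add: sum_Suc_diff')
      finally show ?thesis .
    qed
    define K where "K = 4 * M * (W a b)^2 + 4 * V a b * W a b"
    have K0: "0 \<le> K" unfolding K_def using M0 W0[of a b] V0[of a b] by simp
    have hyp: "norm (Xi a' b' - Xi a' u - Xi u b') \<le> K * ((rho a' u + rho u b') / 2) powr (2/p)"
      if "a \<le> a'" "a' < u" "u < b'" "b' \<le> b" for a' u b'
    proof -
      define D where "D \<mu> = f \<mu> (x a') - f \<mu> (x u) - f \<mu> (xt a') + f \<mu> (xt u)" for \<mu>
      have eq: "Xi a' b' - Xi a' u - Xi u b' = (\<Sum>\<mu><d. (w b' \<mu> - w u \<mu>) *\<^sub>R D \<mu>)
          + (\<Sum>\<mu><d. (v b' \<mu> - v u \<mu>) *\<^sub>R (f \<mu> (xt a') - f \<mu> (xt u)))"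
        unfolding Xi_def sum_subtractf[symmetric] sum.distrib[symmetric]
        by (intro sum.cong refl) (simp add: D_def v_def algebra_simps)
      have sa: "s \<le> a'" "u \<le> t" "b' \<le> t" using that less.prems by auto
      have IH: "norm (e u - e a') \<le> 2 * M * W a' u + 2 * V a' u"
        using less.hyps[of u a'] that less.prems by auto
      have xtb: "norm (xt u - xt a') \<le> 2 * W a' u"
        using xt_incr[OF tN small Zd sa(1), of u] that sa by simp
      have ea: "norm (e a') \<le> M" using M[of a'] sa that less.prems by simp
      have nD: "norm (D \<mu>) \<le> L * (4 * M * W a' u + 2 * V a' u)" if "\<mu> < d" for \<mu>
      proof -
        have "norm (D \<mu>) = norm (f \<mu> (x a' + (x u - x a')) - f \<mu> (x a') - f \<mu> (xt a' + (xt u - xt a')) + f \<mu> (xt a'))"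
        proof -
          have "D \<mu> = - (f \<mu> (x a' + (x u - x a')) - f \<mu> (x a') - f \<mu> (xt a' + (xt u - xt a')) + f \<mu> (xt a'))"
            unfolding D_def by (simp add: algebra_simps)
          then show ?thesis by (simp only: norm_minus_cancel)
        qed
        also have "\<dots> \<le> L * norm ((x u - x a') - (xt u - xt a')) + L * norm (xt u - xt a') * norm (x a' - xt a')"
          by (rule C2b_second[OF f[OF that]])
        also have "(x u - x a') - (xt u - xt a') = e u - e a'" unfolding e_def by (simp add: algebra_simps)
        also have "x a' - xt a' = e a'" unfolding e_def ..
        also have "L * norm (e u - e a') + L * norm (xt u - xt a') * norm (e a')
            \<le> L * (2 * M * W a' u + 2 * V a' u) + L * (2 * W a' u) * M"
          using IH xtb ea L M0 W0[of a' u] by (intro add_mono mult_left_mono mult_mono) auto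
        also have "\<dots> = L * (4 * M * W a' u + 2 * V a' u)" by (simp add: algebra_simps)
        finally show ?thesis .
      qed
      have A: "norm (\<Sum>\<mu><d. (w b' \<mu> - w u \<mu>) *\<^sub>R D \<mu>) \<le> (4 * M * W a' u + 2 * V a' u) * W u b'"
      proof -
        have "norm (\<Sum>\<mu><d. (w b' \<mu> - w u \<mu>) *\<^sub>R D \<mu>) \<le> L * (4 * M * W a' u + 2 * V a' u) * l1norm d (\<lambda>\<mu>. w b' \<mu> - w u \<mu>)"
          by (rule norm_sum_scaleR_le) (rule nD)
        also have "\<dots> = (4 * M * W a' u + 2 * V a' u) * (L * l1norm d (\<lambda>\<mu>. w b' \<mu> - w u \<mu>))" by simp
        also have "\<dots> \<le> (4 * M * W a' u + 2 * V a' u) * W u b'"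
          using w_W[of u b'] that M0 W0[of a' u] V0[of a' u] by (intro mult_left_mono) auto
        finally show ?thesis .
      qed
      have B: "norm (\<Sum>\<mu><d. (v b' \<mu> - v u \<mu>) *\<^sub>R (f \<mu> (xt a') - f \<mu> (xt u))) \<le> 2 * W a' u * V u b'"
      proof -
        have "norm (\<Sum>\<mu><d. (v b' \<mu> - v u \<mu>) *\<^sub>R (f \<mu> (xt a') - f \<mu> (xt u))) \<le> (L * norm (xt u - xt a')) * l1norm d (\<lambda>\<mu>. v b' \<mu> - v u \<mu>)"
          by (rule norm_sum_scaleR_le) (use C2b_lip[OF f] in \<open>simp add: norm_minus_commute\<close>)
        also have "\<dots> = norm (xt u - xt a') * (L * l1norm d (\<lambda>\<mu>. v b' \<mu> - v u \<mu>))" by simp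
        also have "\<dots> \<le> (2 * W a' u) * V u b'"
          using xtb v_V[of u b'] that L W0[of a' u] by (intro mult_mono) (auto simp: l1norm_def)
        finally show ?thesis by simp
      qed
      define ra where "ra = rho a' u powr (1/p)"
      define rb where "rb = rho u b' powr (1/p)"
      have ra0: "0 \<le> ra" "0 \<le> rb" unfolding ra_def rb_def by simp_all
      have Wa: "W a' u \<le> W a b * ra" and Va: "V a' u \<le> V a b * ra"
        unfolding ra_def using Wrho[of a' u] Vrho[of a' u] that by auto
      have Wb: "W u b' \<le> W a b * rb" and Vb: "V u b' \<le> V a b * rb"
        unfolding rb_def using Wrho[of u b'] Vrho[of u b'] that by auto
      have p1: "W a' u * W u b' \<le> (W a b * ra) * (W a b * rb)"
        using Wa Wb W0 ra0 by (intro mult_mono) auto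
      have p2: "V a' u * W u b' \<le> (V a b * ra) * (W a b * rb)"
        using Va Wb W0 V0 ra0 by (intro mult_mono) auto
      have p3: "W a' u * V u b' \<le> (W a b * ra) * (V a b * rb)"
        using Wa Vb W0 V0 ra0 by (intro mult_mono) auto
      have "norm (Xi a' b' - Xi a' u - Xi u b') \<le> (4 * M * W a' u + 2 * V a' u) * W u b' + 2 * W a' u * V u b'"
        unfolding eq using A B norm_triangle_ineq[of "\<Sum>\<mu><d. (w b' \<mu> - w u \<mu>) *\<^sub>R D \<mu>" "\<Sum>\<mu><d. (v b' \<mu> - v u \<mu>) *\<^sub>R (f \<mu> (xt a') - f \<mu> (xt u))"] by linarith
      also have "\<dots> = 4 * M * (W a' u * W u b') + 2 * (V a' u * W u b') + 2 * (W a' u * V u b')"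
        by (simp add: algebra_simps)
      also have "\<dots> \<le> 4 * M * ((W a b * ra) * (W a b * rb)) + 2 * ((V a b * ra) * (W a b * rb)) + 2 * ((W a b * ra) * (V a b * rb))"
        using p1 p2 p3 M0 by (intro add_mono mult_left_mono) auto
      also have "\<dots> = K * (ra * rb)" unfolding K_def by (simp add: algebra_simps power2_eq_square)
      also have "\<dots> \<le> K * ((rho a' u + rho u b') / 2) powr (2/p)"
        unfolding ra_def rb_def using amgm_powr[OF p0 rho0 rho0] K0 by (intro mult_left_mono) auto
      finally show ?thesis .
    qed
    have sew: "norm ((\<Sum>k\<in>{a..<b}. Xi k (Suc k)) - Xi a b) \<le> K * zetaN N (2/p) * rho a b powr (2/p)"
      by (rule sewing[OF _ K0 rho_ctrl hyp]) (use p ab less.prems tN in auto)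
    have "rho a b powr (2/p) \<le> 2 powr (2/p)" using rho_ab rho0 p by (intro powr_mono2) auto
    then have "K * zetaN N (2/p) * rho a b powr (2/p) \<le> K * zetaN N (2/p) * 2 powr (2/p)"
      using K0 Z0 unfolding Z_def by (intro mult_left_mono) auto
    then have sew2: "norm ((e b - e a) - Xi a b) \<le> K * C"
      using sew unfolding tel C_def Z_def by (simp add: algebra_simps)
    have W0ab: "W a b \<le> \<delta>" using W_mono[of s a b t] less.prems small by simp
    have nXi: "norm (Xi a b) \<le> M * W a b + V a b"
    proof -
      have "norm (e a) * W a b \<le> M * W a b" using M[of a] less.prems W0[of a b] by (intro mult_right_mono) auto
      then show ?thesis using Xi_bound[of a b] ab unfolding Xi_def by linarith
    qed
    have KC: "K * C \<le> M * W a b + V a b"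
    proof -
      have "K * C = (4 * C * W a b) * (M * W a b + V a b)" unfolding K_def by (simp add: algebra_simps power2_eq_square)
      also have "\<dots> \<le> (4 * C * \<delta>) * (M * W a b + V a b)"
        using W0ab C0 M0 W0[of a b] V0[of a b] by (intro mult_right_mono) (auto intro: mult_left_mono)
      also have "\<dots> \<le> 1 * (M * W a b + V a b)"
        using Cd M0 W0[of a b] V0[of a b] by (intro mult_right_mono) auto
      finally show ?thesis by simp
    qed
    have "norm (e b - e a) \<le> norm (Xi a b) + norm ((e b - e a) - Xi a b)"
      by (metis add.commute diff_add_cancel norm_triangle_ineq)
    then show ?thesis using nXi sew2 KC by simp
  qed
qed

end

context setting
begin

lemma om_refl: "om s s = 0" unfolding om_def by (simp add: cvar_refl)

lemma local_bound:
  assumes st: "s \<le> t" "t \<le> N" and small: "W s t \<le> \<delta>" and Zd: "2 * Z * \<delta> \<le> 1"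
    and Cd: "4 * C * \<delta> \<le> 1" and d4: "4 * \<delta> \<le> 1"
    and k: "s \<le> k" "k \<le> t"
  shows "norm (e k) \<le> 2 * norm (e s) + 4 * V s t"
proof -
  define M where "M = Max ((\<lambda>k. norm (e k)) ` {s..t})"
  have fin: "finite ((\<lambda>k. norm (e k)) ` {s..t})" by simp
  have ne: "(\<lambda>k. norm (e k)) ` {s..t} \<noteq> {}" using st by simp
  have Mb: "\<And>k. s \<le> k \<Longrightarrow> k \<le> t \<Longrightarrow> norm (e k) \<le> M" unfolding M_def by (intro Max_ge) auto
  have "M \<in> (\<lambda>k. norm (e k)) ` {s..t}" unfolding M_def by (rule Max_in[OF fin ne])
  then obtain k0 where k0: "s \<le> k0" "k0 \<le> t" "norm (e k0) = M" by auto
  have M0: "0 \<le> M" using k0 by auto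
  have "norm (e k0 - e s) \<le> 2 * M * W s k0 + 2 * V s k0"
    by (rule step2[OF st(2) small Zd Cd Mb]) (use k0 in auto)
  moreover have "W s k0 \<le> \<delta>" using W_mono[of s s k0 t] k0 small by simp
  moreover have "V s k0 \<le> V s t" using V_mono[of s s k0 t] k0 by simp
  moreover have "2 * M * W s k0 \<le> 2 * M * \<delta>" using M0 \<open>W s k0 \<le> \<delta>\<close> by (intro mult_left_mono) auto
  ultimately have "norm (e k0 - e s) \<le> 2 * M * \<delta> + 2 * V s t" by linarith
  moreover have "norm (e k0) \<le> norm (e s) + norm (e k0 - e s)"
    by (metis add.commute diff_add_cancel norm_triangle_ineq)
  moreover have "M * (4 * \<delta>) \<le> M * 1" using d4 M0 by (intro mult_left_mono) auto
  ultimately have "M \<le> 2 * norm (e s) + 4 * V s t" using k0 by linarith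
  then show ?thesis using Mb[OF k] by linarith
qed

definition "Y k = norm (e k) + 4 * V 0 N"

lemma Y0: "0 \<le> Y k" unfolding Y_def using V0 by simp

lemma block:
  assumes c3: "c \<ge> 3" and dl: "\<delta> = (2 / c) powr (1 / p)" and Zd: "2 * Z * \<delta> \<le> 1"
    and Cd: "4 * C * \<delta> \<le> 1" and d4: "4 * \<delta> \<le> 1"
  shows "s \<le> N \<Longrightarrow> s \<le> k \<Longrightarrow> k \<le> N \<Longrightarrow> Y k \<le> 2 * exp (c * om s N) * Y s"
proof (induction "N - s" arbitrary: s k rule: less_induct)
  case less
  define U where "U = {u. s \<le> u \<and> u \<le> N \<and> om s u \<le> 2 / c}"
  define u where "u = Max U"
  have finU: "finite U" unfolding U_def by (rule finite_subset[of _ "{..N}"]) auto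
  have sU: "s \<in> U" unfolding U_def using less.prems c3 om_refl[of s] by simp
  have uU: "u \<in> U" unfolding u_def using Max_in[OF finU] sU by blast
  have su: "s \<le> u" "u \<le> N" "om s u \<le> 2 / c" using uU unfolding U_def by auto
  have umax: "2 / c < om s u'" if "u < u'" "u' \<le> N" for u'
  proof (rule ccontr)
    assume "\<not> 2 / c < om s u'"
    then have "u' \<in> U" unfolding U_def using that su by simp
    then have "u' \<le> u" unfolding u_def using Max_ge[OF finU] by blast
    then show False using that by simp
  qed
  have Wsu: "W s u \<le> \<delta>" unfolding W_def dl using su om0 p by (intro powr_mono2) auto
  have loc: "Y k' \<le> 2 * Y s" if "s \<le> k'" "k' \<le> u" for k'
  proof -
    have "norm (e k') \<le> 2 * norm (e s) + 4 * V s u"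
      by (rule local_bound[OF su(1,2) Wsu Zd Cd d4 that])
    moreover have "V s u \<le> V 0 N" using V_mono[of 0 s u N] su by simp
    ultimately show ?thesis unfolding Y_def by simp
  qed
  have c0: "0 \<le> c" using c3 by simp
  have ex1: "1 \<le> exp (c * om s N)" using c0 om0[of s N] by simp
  show ?case
  proof (cases "k \<le> u")
    case True
    have "Y k \<le> 2 * Y s" using loc[of k] True less.prems by simp
    also have "\<dots> \<le> 2 * exp (c * om s N) * Y s" using ex1 Y0[of s] by (simp add: mult_right_mono)
    finally show ?thesis .
  next
    case False
    define u1 where "u1 = Suc u"
    have uN: "u < N" using False less.prems by simp
    have u1N: "u1 \<le> N" "u1 \<le> k" using uN False unfolding u1_def by auto
    have om_big: "2 / c < om s u1" using umax[of u1] u1N unfolding u1_def by simp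
    define A where "A = W u u1"
    have A0: "0 \<le> A" unfolding A_def by (rule W0)
    have jump: "norm (e u1) \<le> (1 + A) * norm (e u) + V 0 N"
    proof -
      have "norm (e u1 - e u) \<le> norm (e u) * A + V u u1"
        using Xi_bound[of u u1] e_step[OF uN] unfolding A_def u1_def by simp
      moreover have "V u u1 \<le> V 0 N" using V_mono[of 0 u u1 N] u1N unfolding u1_def by simp
      moreover have "norm (e u1) \<le> norm (e u) + norm (e u1 - e u)"
        by (metis add.commute diff_add_cancel norm_triangle_ineq)
      ultimately show ?thesis by (simp add: algebra_simps)
    qed
    have Yu1: "Y u1 \<le> (5/4) * (1 + A) * Y u"
    proof -
      have "Y u1 \<le> (1 + A) * norm (e u) + 5 * V 0 N" using jump unfolding Y_def by simp
      also have "\<dots> \<le> (5/4) * (1 + A) * norm (e u) + 5 * (1 + A) * V 0 N"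
      proof (intro add_mono)
        show "(1 + A) * norm (e u) \<le> 5 / 4 * (1 + A) * norm (e u)"
          using A0 by (intro mult_right_mono) auto
        show "5 * V 0 N \<le> 5 * (1 + A) * V 0 N"
          using A0 V0[of 0 N] by (intro mult_right_mono) auto
      qed
      also have "\<dots> = (5/4) * (1 + A) * Y u" unfolding Y_def by (simp add: algebra_simps)
      finally show ?thesis .
    qed
    have Yu: "Y u \<le> 2 * Y s" using loc[of u] su by simp
    have Yu1s: "Y u1 \<le> (5/2) * (1 + A) * Y s"
    proof -
      have "(5/4) * (1 + A) * Y u \<le> (5/4) * (1 + A) * (2 * Y s)" using Yu A0 by (intro mult_left_mono) auto
      then have "Y u1 \<le> (5/4) * (1 + A) * (2 * Y s)" using Yu1 by linarith
      then show ?thesis by (simp add: algebra_simps)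
    qed
    have Apow: "A powr p \<le> om s u1"
    proof -
      have "A powr p = om u u1" unfolding A_def W_def using om0 p by (simp add: powr_powr powr_one)
      also have "\<dots> \<le> om s u1" using ctrl_mono[OF om_ctrl, of s u u1 u1] su unfolding u1_def by simp
      finally show ?thesis .
    qed
    have expb: "(5/2) * (1 + A) \<le> exp (c * om s u1)"
    proof (cases "A \<le> 1")
      case True
      have "(5/2) * (1 + A) \<le> 5" using True by simp
      also have "\<dots> \<le> exp 2" by (rule exp2_ge5)
      also have "\<dots> \<le> exp (c * om s u1)" using om_big c3 by (simp add: field_simps)
      finally show ?thesis .
    next
      case False
      have "A = A powr 1" using A0 by (simp add: powr_one)
      also have "\<dots> \<le> A powr p" using False p by (intro powr_mono) auto
      finally have "A \<le> om s u1" using Apow by simp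
      moreover have "3 * A \<le> c * A" using c3 A0 by (intro mult_right_mono) auto
      ultimately have "3 * A \<le> c * om s u1" using c0 by (meson mult_left_mono order_trans)
      then have "A + 2 \<le> c * om s u1" using False by simp
      then have "exp (A + 2) \<le> exp (c * om s u1)" by simp
      moreover have "(5/2) * (1 + A) \<le> exp A * exp 2"
      proof -
        have "1 + A \<le> exp A" by (rule exp_ge_add_one_self)
        then have "(1 + A) * 5 \<le> exp A * exp 2" using exp2_ge5 A0 by (intro mult_mono) auto
        moreover have "5 / 2 * (1 + A) \<le> (1 + A) * 5" using A0 by (simp add: algebra_simps)
        ultimately show ?thesis by linarith
      qed
      ultimately show ?thesis by (simp add: exp_add)
    qed
    have IH: "Y k \<le> 2 * exp (c * om u1 N) * Y u1"
      using less.hyps[of u1 k] u1N less.prems su unfolding u1_def by auto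
    have "Y k \<le> 2 * exp (c * om u1 N) * ((5/2) * (1 + A) * Y s)"
      using IH Yu1s order_trans[OF IH mult_left_mono[OF Yu1s]] by simp
    also have "\<dots> \<le> 2 * exp (c * om u1 N) * (exp (c * om s u1) * Y s)"
      using expb Y0[of s] by (intro mult_left_mono mult_right_mono) auto
    also have "\<dots> = 2 * exp (c * (om s u1 + om u1 N)) * Y s"
      by (simp add: exp_add algebra_simps)
    also have "\<dots> \<le> 2 * exp (c * om s N) * Y s"
    proof -
      have "om s u1 + om u1 N \<le> om s N" using om_ctrl su u1N unfolding ctrl_ok_def u1_def by auto
      then have "c * (om s u1 + om u1 N) \<le> c * om s N" using c0 by (intro mult_left_mono)
      then show ?thesis using Y0[of s] by (intro mult_right_mono) auto
    qed
    finally show ?thesis .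
  qed
qed

end

lemma const_facts:
  fixes p :: real and N :: nat
  assumes p: "1 \<le> p"
  shows "cpN p N \<ge> 3" "cpN p N powr (1/p) \<ge> 4"
    "4 * CpN p N * (2 / cpN p N) powr (1/p) \<le> 1"
    "4 * (2 / cpN p N) powr (1/p) \<le> 1"
    "2 * zetaN N (2/p) * (2 / cpN p N) powr (1/p) \<le> 1"
proof -
  define Cc where "Cc = CpN p N"
  define c where "c = cpN p N"
  define \<delta> where "\<delta> = (2 / c) powr (1/p)"
  define m where "m = max Cc 1"
  define E where "E = 4 * exp (2::real)"
  have Z0: "0 \<le> zetaN N (2/p)" by (rule zetaN_nonneg)
  have Cc0: "0 \<le> Cc" unfolding Cc_def CpN_def using Z0 by simp
  have m1: "1 \<le> m" "Cc \<le> m" unfolding m_def by auto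
  have E20: "20 \<le> E" unfolding E_def using exp2_ge5 by simp
  have c_eq: "c = E powr p * (4 powr (p - 1) * Cc powr p + 1)"
    unfolding c_def cpN_def E_def Cc_def ..
  have h1: "m powr p \<le> 4 powr (p - 1) * Cc powr p + 1"
  proof (cases "Cc \<ge> 1")
    case True
    then have "m = Cc" unfolding m_def by simp
    have "1 \<le> (4::real) powr (p - 1)" using p by (intro ge_one_powr_ge_zero) auto
    then have "Cc powr p \<le> 4 powr (p - 1) * Cc powr p"
      using mult_right_mono[of 1 "4 powr (p - 1)" "Cc powr p"] by simp
    then show ?thesis using \<open>m = Cc\<close> by simp
  next
    case False
    then have "m = 1" unfolding m_def by simp
    then show ?thesis by simp
  qed
  have Em1: "20 \<le> E * m" using E20 m1 by (metis mult_1_right mult_left_mono order_trans le_numeral_extra(1) dual_order.trans zero_le_numeral)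
  have h2: "(E * m) powr p \<le> c"
  proof -
    have "(E * m) powr p = E powr p * m powr p" by (simp add: powr_mult)
    also have "\<dots> \<le> E powr p * (4 powr (p - 1) * Cc powr p + 1)"
      using h1 by (intro mult_left_mono) auto
    finally show ?thesis unfolding c_eq .
  qed
  have h3: "E * m \<le> (E * m) powr p"
  proof -
    have "E * m = (E * m) powr 1" using Em1 by (simp add: powr_one)
    also have "\<dots> \<le> (E * m) powr p" using p Em1 by (intro powr_mono) auto
    finally show ?thesis .
  qed
  show "cpN p N \<ge> 3" using h2 h3 Em1 unfolding c_def by linarith
  have "((E * m) powr p) powr (1/p) \<le> c powr (1/p)" using h2 p by (intro powr_mono2) auto
  moreover have "((E * m) powr p) powr (1/p) = E * m" using p Em1 E20 m1 by (simp add: powr_powr powr_one)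
  ultimately have "E * m \<le> c powr (1/p)" by simp
  then show "cpN p N powr (1/p) \<ge> 4" using Em1 unfolding c_def by linarith
  have pos: "0 < (E * m) powr p" using Em1 E20 m1 by simp
  have cpos: "0 < c" using h2 pos by linarith
  then have "0 < c * (E * m) powr p" using pos by simp
  then have "2 / c \<le> 2 / (E * m) powr p" using h2 by (intro divide_left_mono) auto
  then have "\<delta> \<le> (2 / (E * m) powr p) powr (1/p)" unfolding \<delta>_def using p pos h2 cpos by (intro powr_mono2) auto
  also have "\<dots> = 2 powr (1/p) / (E * m)"
    using p Em1 E20 m1 by (simp add: powr_divide powr_powr powr_one)
  also have "\<dots> \<le> 2 / (E * m)"
  proof -
    have "(2::real) powr (1/p) \<le> 2 powr 1" using p by (intro powr_mono) auto
    then show ?thesis using Em1 by (intro divide_right_mono) auto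
  qed
  finally have d1: "\<delta> \<le> 2 / (E * m)" .
  have d0: "0 \<le> \<delta>" unfolding \<delta>_def by simp
  have "4 * m * \<delta> \<le> 4 * m * (2 / (E * m))" using d1 m1 by (intro mult_left_mono) auto
  also have "\<dots> = 8 / E" using m1 by (simp add: field_simps)
  also have "\<dots> \<le> 1" using E20 by simp
  finally have md: "4 * m * \<delta> \<le> 1" .
  have "4 * Cc * \<delta> \<le> 4 * m * \<delta>" using m1 d0 by (intro mult_right_mono) auto
  then show "4 * CpN p N * (2 / cpN p N) powr (1/p) \<le> 1" using md unfolding Cc_def c_def \<delta>_def by simp
  have "4 * \<delta> \<le> 4 * m * \<delta>" using m1 d0 by (simp add: mult_right_mono)
  then show "4 * (2 / cpN p N) powr (1/p) \<le> 1" using md unfolding c_def \<delta>_def by simp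
  have "zetaN N (2/p) \<le> Cc"
  proof -
    have "1 \<le> (2::real) powr (2/p)" using p by (intro ge_one_powr_ge_zero) auto
    then show ?thesis unfolding Cc_def CpN_def using Z0 mult_right_mono[of 1 "2 powr (2/p)" "zetaN N (2/p)"] by simp
  qed
  then have "2 * zetaN N (2/p) * \<delta> \<le> 4 * m * \<delta>" using m1 d0 Z0 by (intro mult_right_mono) auto
  then show "2 * zetaN N (2/p) * (2 / cpN p N) powr (1/p) \<le> 1" using md unfolding c_def \<delta>_def by simp
qed

theorem theorem5p4:
  fixes p L :: real and N d :: nat
    and f :: "nat \<Rightarrow> 'a::real_normed_vector \<Rightarrow> 'a"
    and w wt :: "nat \<Rightarrow> nat \<Rightarrow> real"
    and xi xit :: 'a and x xt :: "nat \<Rightarrow> 'a"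
  assumes fin_dim: "\<exists>B::'a set. finite B \<and> span B = UNIV"
    and nontriv: "\<exists>v::'a. v \<noteq> 0"
    and p: "1 \<le> p" "p < 2"
    and d: "d \<ge> 1"
    and L: "L > 0"
    and f: "\<And>\<mu>. \<mu> < d \<Longrightarrow> C2b_bounded (f \<mu>) L"
    and x0: "x 0 = xi"
    and xstep: "\<And>k. k < N \<Longrightarrow>
        x (Suc k) = x k + (\<Sum>\<mu><d. (w (Suc k) \<mu> - w k \<mu>) *\<^sub>R f \<mu> (x k))"
    and xt0: "xt 0 = xit"
    and xtstep: "\<And>k. k < N \<Longrightarrow>
        xt (Suc k) = xt k + (\<Sum>\<mu><d. (wt (Suc k) \<mu> - wt k \<mu>) *\<^sub>R f \<mu> (xt k))"
  shows "Max ((\<lambda>k. norm (x k - xt k)) ` {0..N})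
    \<le> 2 * cpN p N powr (1 / p)
        * exp (cpN p N * L powr p * (pvar p d w 0 N powr p + pvar p d wt 0 N powr p))
        * (norm (xi - xit) + L * pvar p d (\<lambda>k \<mu>. w k \<mu> - wt k \<mu>) 0 N)"
proof -
  interpret S: setting p L N d f w wt x xt
    by unfold_locales (use p L f xstep xtstep in auto)
  define c where "c = cpN p N"
  define \<delta> where "\<delta> = (2 / c) powr (1/p)"
  have cf: "c \<ge> 3" "c powr (1/p) \<ge> 4" "4 * S.C * \<delta> \<le> 1" "4 * \<delta> \<le> 1" "2 * S.Z * \<delta> \<le> 1"
    using const_facts[OF p(1), of N] unfolding c_def \<delta>_def S.C_def S.Z_def CpN_def by auto
  have blk: "S.Y k \<le> 2 * exp (c * S.om 0 N) * S.Y 0" if "k \<le> N" for k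
    by (rule S.block[OF cf(1) \<delta>_def cf(5) cf(3) cf(4)]) (use that in auto)
  define R where "R = norm (xi - xit) + S.V 0 N"
  have V0N: "0 \<le> S.V 0 N" by (rule S.V0)
  have ex0: "0 \<le> exp (c * S.om 0 N)" by simp
  have bnd: "norm (x k - xt k) \<le> 2 * c powr (1/p) * exp (c * S.om 0 N) * R" if "k \<le> N" for k
  proof -
    have "norm (x k - xt k) \<le> S.Y k" unfolding S.Y_def S.e_def using V0N by simp
    also have "\<dots> \<le> 2 * exp (c * S.om 0 N) * S.Y 0" by (rule blk[OF that])
    also have "S.Y 0 \<le> 4 * R" unfolding S.Y_def S.e_def R_def x0 xt0 by simp
    then have "2 * exp (c * S.om 0 N) * S.Y 0 \<le> 2 * exp (c * S.om 0 N) * (4 * R)"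
      using ex0 by (intro mult_left_mono) auto
    also have "\<dots> = 4 * (2 * exp (c * S.om 0 N) * R)" by simp
    also have "\<dots> \<le> c powr (1/p) * (2 * exp (c * S.om 0 N) * R)"
      using cf(2) ex0 V0N unfolding R_def by (intro mult_right_mono) auto
    finally show ?thesis by (simp add: algebra_simps)
  qed
  have pw: "pvar p d y 0 N powr p = cvar p d y 0 N" for y
    using pvar_cvar[of 0 N p d y] cvar_nonneg[of p d y 0 N] p by (simp add: powr_powr powr_one)
  have om_eq: "S.om 0 N = L powr p * (pvar p d w 0 N powr p + pvar p d wt 0 N powr p)"
    unfolding S.om_def pw ..
  have V_eq: "S.V 0 N = L * pvar p d (\<lambda>k \<mu>. w k \<mu> - wt k \<mu>) 0 N"
  proof -
    have "S.V 0 N = (L powr p) powr (1/p) * cvar p d S.v 0 N powr (1/p)"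
      unfolding S.V_def S.la_def by (simp add: powr_mult)
    also have "(L powr p) powr (1/p) = L" using L p by (simp add: powr_powr powr_one)
    finally show ?thesis unfolding S.v_def using pvar_cvar[of 0 N p d] by simp
  qed
  show ?thesis
  proof (rule Max.boundedI)
    show "finite ((\<lambda>k. norm (x k - xt k)) ` {0..N})" by simp
    show "(\<lambda>k. norm (x k - xt k)) ` {0..N} \<noteq> {}" by simp
    fix r assume "r \<in> (\<lambda>k. norm (x k - xt k)) ` {0..N}"
    then obtain k where k: "k \<le> N" "r = norm (x k - xt k)" by auto
    have "r \<le> 2 * c powr (1/p) * exp (c * S.om 0 N) * R" using bnd[OF k(1)] k(2) by simp
    also have "\<dots> = 2 * cpN p N powr (1 / p)
        * exp (cpN p N * L powr p * (pvar p d w 0 N powr p + pvar p d wt 0 N powr p))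
        * (norm (xi - xit) + L * pvar p d (\<lambda>k \<mu>. w k \<mu> - wt k \<mu>) 0 N)"
      unfolding R_def c_def om_eq V_eq by (simp add: mult.assoc)
    finally show "r \<le> 2 * cpN p N powr (1 / p)
        * exp (cpN p N * L powr p * (pvar p d w 0 N powr p + pvar p d wt 0 N powr p))
        * (norm (xi - xit) + L * pvar p d (\<lambda>k \<mu>. w k \<mu> - wt k \<mu>) 0 N)" .
  qed
qed

end
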